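(* Let $P,Q$ be lattice paths from $(0,0)$ to $(m,r)$ with $P$ never going above $Q$ and $[P,Q]$ a connected skew shape. Then the number of edges of the lattice path matroid polytope $\mathcal{P}(M[P,Q])$ equals $\sum_L \mathrm{area}(L',L)$, where the sum runs over all lattice paths $L$ from $(0,0)$ to $(m,r)$ inside the region $[P,Q]$, and $\mathrm{area}(L',L)$ is the number of unit boxes in the region between $L'=L'(P,L)$ and $L$.
   Context: Lattice paths use steps $E=(1,0)$, $N=(0,1)$. $M[P,Q]$ is the matroid on $[m+r]$ whose bases are the $r$-subsets $B$ such that the lattice path with North steps exactly at positions in $B$ stays in the region between $P$ and $Q$; $\mathcal{P}(M[P,Q])=\mathrm{conv}\{\sum_{b\in B}e_b: B\text{ a basis}\}\subseteq\mathbb{R}^{m+r}$. $[P,Q]$ connected means $P$ and $Q$ meet only at $(0,0)$ and $(m,r)$. For a lattice path $L$ inside $[P,Q]$ from $(0,0)$ to $(m,r)$, $L'=L'(P,L)$ is the lattice path that passes through all intersection points of $P$ and $L$ and, for each maximal connected region between $P$ and $L$ with starting point $(x,y)$ and ending point $(x+a,y+b)$, consists of the steps $E^aN^b$ from $(x,y)$ to $(x+a,y+b)$. *)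

theory Defs
  imports "HOL-Analysis.Analysis"
begin

text \<open>A lattice path with steps E=(1,0), N=(0,1) is encoded as a bool list:
  entry True = N step, False = E step.  Step number i (1-based) is entry i-1.\<close>

text \<open>Height (y-coordinate) after the first k steps; the point reached after k
  steps is (k - ht L k, ht L k).\<close>
definition ht :: "bool list \<Rightarrow> nat \<Rightarrow> nat" where
  "ht L k = length (filter id (take k L))"

definition lpath :: "nat \<Rightarrow> nat \<Rightarrow> bool list \<Rightarrow> bool" where
  "lpath m r L \<longleftrightarrow> length L = m + r \<and> ht L (m + r) = r"

definition never_above :: "bool list \<Rightarrow> bool list \<Rightarrow> bool" where
  "never_above L L2 \<longleftrightarrow> (\<forall>k \<le> length L. ht L k \<le> ht L2 k)"

text \<open>[P,Q] connected: P and Q meet only at (0,0) and (m,r).\<close>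
definition connected_region :: "nat \<Rightarrow> nat \<Rightarrow> bool list \<Rightarrow> bool list \<Rightarrow> bool" where
  "connected_region m r P Q \<longleftrightarrow>
     (\<forall>k i. (k - ht P k, ht P k) = (i - ht Q i, ht Q i) \<and> k \<le> m + r \<and> i \<le> m + r
        \<longrightarrow> (k = 0 \<and> i = 0) \<or> (k = m + r \<and> i = m + r))"

definition region_paths :: "nat \<Rightarrow> nat \<Rightarrow> bool list \<Rightarrow> bool list \<Rightarrow> bool list set" where
  "region_paths m r P Q = {L. lpath m r L \<and> never_above P L \<and> never_above L Q}"

definition path_of :: "nat \<Rightarrow> nat set \<Rightarrow> bool list" where
  "path_of n B = map (\<lambda>i. Suc i \<in> B) [0..<n]"

definition lpm_bases :: "nat \<Rightarrow> nat \<Rightarrow> bool list \<Rightarrow> bool list \<Rightarrow> nat set set" where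
  "lpm_bases m r P Q =
     {B. B \<subseteq> {1..m+r} \<and> card B = r \<and> path_of (m + r) B \<in> region_paths m r P Q}"

text \<open>Matroid polytope in R^{m+r}; coordinates are labelled through a bijection
  idx : {1..m+r} \<rightarrow> 'n, so that e_b is the basis vector of coordinate idx b.\<close>
definition lpm_polytope :: "(nat \<Rightarrow> 'n::finite) \<Rightarrow> nat \<Rightarrow> nat \<Rightarrow> bool list \<Rightarrow> bool list \<Rightarrow> (real ^ 'n) set" where
  "lpm_polytope idx m r P Q =
     convex hull ((\<lambda>B. (\<chi> j. if j \<in> idx ` B then 1 else 0)) ` lpm_bases m r P Q)"

definition edges :: "'a::euclidean_space set \<Rightarrow> 'a set set" where
  "edges K = {F. F face_of K \<and> aff_dim F = 1}"

text \<open>Intersection points of P and L, as step indices k (the point after k steps).\<close>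
definition isect :: "bool list \<Rightarrow> bool list \<Rightarrow> nat set" where
  "isect P L = {k. k \<le> length L \<and> ht P k = ht L k}"

text \<open>L' = L'(P,L): through all intersection points of P and L; between consecutive
  intersection points (x,y) and (x+a,y+b) it consists of E^a N^b.
  Step i (0-based) lies between k1 = last intersection \<le> i and k2 = next
  intersection > i; a = number of E steps of L between them.\<close>
definition Lprime :: "bool list \<Rightarrow> bool list \<Rightarrow> bool list" where
  "Lprime P L = map (\<lambda>i.
      let k1 = Max {k \<in> isect P L. k \<le> i};
          k2 = Min {k \<in> isect P L. i < k};
          a = (k2 - k1) - (ht L k2 - ht L k1)
      in a \<le> i - k1) [0..<length L]"

text \<open>Unit boxes [i,i+1]x[j,j+1] lying below the path L (under its E step at column i).\<close>
definition boxes_below :: "bool list \<Rightarrow> (nat \<times> nat) set" where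
  "boxes_below L = {(i, j). \<exists>k < length L. \<not> L ! k \<and> k - ht L k = i \<and> j < ht L k}"

definition area :: "bool list \<Rightarrow> bool list \<Rightarrow> nat" where
  "area L1 L2 = card (boxes_below L2 - boxes_below L1)"

end

theory Submission
  imports Defs
begin

lemma ht_0[simp]: "ht L 0 = 0" by (simp add: ht_def)

lemma ht_Suc: "ht L (Suc k) = ht L k + (if k < length L \<and> L ! k then 1 else 0)"
  unfolding ht_def by (cases "k < length L") (auto simp add: take_Suc_conv_app_nth)

lemma ht_le: "ht L k \<le> k"
  unfolding ht_def by (metis length_filter_le length_take min.bounded_iff)

lemma ht_mono: "k \<le> k' \<Longrightarrow> ht L k \<le> ht L k'"
  by (induction k' rule: dec_induct) (auto simp: ht_Suc)

lemma ht_diff_le: "k \<le> k' \<Longrightarrow> ht L k' \<le> ht L k + (k' - k)"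
  by (induction k' rule: dec_induct) (auto simp: ht_Suc)

lemma ht_beyond: "length L \<le> k \<Longrightarrow> ht L k = ht L (length L)"
  unfolding ht_def by simp

lemma ht_pos: "p < k \<Longrightarrow> p < length L \<Longrightarrow> L ! p \<Longrightarrow> 1 \<le> ht L k"
  using ht_mono[of "Suc p" k L] ht_Suc[of L p] by simp

lemma ht_upd: "p < length L \<Longrightarrow> ht (L[p := v]) k =
   ht L k + (if p < k \<and> \<not> L!p \<and> v then 1 else 0) - (if p < k \<and> L!p \<and> \<not> v then 1 else 0)"
proof (induction k)
  case 0 then show ?case by simp
next
  case (Suc k)
  then show ?case
    using ht_pos[of p k L] by (cases "k = p") (auto simp: ht_Suc nth_list_update)
qed

lemma nth_ht: "k < length L \<Longrightarrow> L ! k = (ht L (Suc k) = Suc (ht L k))"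
  by (simp add: ht_Suc)

lemma eq_by_ht: assumes "length L1 = length L2" "\<forall>k \<le> length L1. ht L1 k = ht L2 k" shows "L1 = L2"
proof (rule nth_equalityI)
  fix i assume "i < length L1"
  then show "L1 ! i = L2 ! i" using assms nth_ht[of i L1] nth_ht[of i L2] by simp
qed (simp add: assms)


definition Nset :: "bool list \<Rightarrow> nat set" where
  "Nset L = {Suc i | i. i < length L \<and> L ! i}"

lemma length_path_of[simp]: "length (path_of n B) = n"
  by (simp add: path_of_def)

lemma path_of_Nset: "path_of (length L) (Nset L) = L"
  by (rule nth_equalityI) (auto simp: path_of_def Nset_def)

lemma Nset_path_of: assumes "B \<subseteq> {1..n}" shows "Nset (path_of n B) = B"
proof
  show "Nset (path_of n B) \<subseteq> B" by (auto simp: Nset_def path_of_def)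
next
  show "B \<subseteq> Nset (path_of n B)"
  proof
    fix b assume b: "b \<in> B"
    with assms have "1 \<le> b" "b \<le> n" by auto
    then have "b = Suc (b - 1)" "b - 1 < n" by auto
    then show "b \<in> Nset (path_of n B)" using b unfolding Nset_def path_of_def
      by (smt (verit) length_map length_upt mem_Collect_eq minus_nat.diff_0 nth_map_upt plus_nat.add_0)
  qed
qed

lemma Nset_sub: "Nset L \<subseteq> {1..length L}"
  by (auto simp: Nset_def)

lemma finite_Nset[simp]: "finite (Nset L)"
  using Nset_sub finite_subset by blast

lemma card_Nset: "card (Nset L) = ht L (length L)"
proof -
  have "Nset L = Suc ` {i. i < length L \<and> L ! i}" by (auto simp: Nset_def)
  then have "card (Nset L) = card {i. i < length L \<and> L ! i}" by (simp add: card_image)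
  also have "\<dots> = length (filter id L)" by (simp add: length_filter_conv_card)
  finally show ?thesis by (simp add: ht_def)
qed

lemma Nset_inj: "length L1 = length L2 \<Longrightarrow> Nset L1 = Nset L2 \<Longrightarrow> L1 = L2"
  by (metis path_of_Nset)

lemma finite_region: "finite (region_paths m r P Q)"
proof -
  have "region_paths m r P Q \<subseteq> {L. length L = m + r}"
    by (auto simp: region_paths_def lpath_def)
  moreover have "finite {L :: bool list. length L = m + r}"
    using finite_lists_length_eq[of "UNIV :: bool set"] by simp
  ultimately show ?thesis using finite_subset by blast
qed

lemma bases_eq: "lpm_bases m r P Q = Nset ` region_paths m r P Q"
proof
  show "lpm_bases m r P Q \<subseteq> Nset ` region_paths m r P Q"
  proof
    fix B assume "B \<in> lpm_bases m r P Q"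
    then have "B \<subseteq> {1..m+r}" "path_of (m+r) B \<in> region_paths m r P Q"
      by (auto simp: lpm_bases_def)
    then show "B \<in> Nset ` region_paths m r P Q"
      using Nset_path_of by (metis image_eqI)
  qed
next
  show "Nset ` region_paths m r P Q \<subseteq> lpm_bases m r P Q"
  proof
    fix B assume "B \<in> Nset ` region_paths m r P Q"
    then obtain L where L: "L \<in> region_paths m r P Q" "B = Nset L" by blast
    then have len: "length L = m + r" and h: "ht L (m+r) = r"
      by (auto simp: region_paths_def lpath_def)
    have "path_of (m+r) B = L" using L len path_of_Nset by metis
    then show "B \<in> lpm_bases m r P Q"
      using L len h Nset_sub[of L] card_Nset[of L] by (auto simp: lpm_bases_def)
  qed
qed


definition swp :: "bool list \<Rightarrow> nat \<Rightarrow> nat \<Rightarrow> bool list" where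
  "swp L i j = L[i := False, j := True]"

definition rse :: "bool list \<Rightarrow> nat \<Rightarrow> nat \<Rightarrow> bool list" where
  "rse L i j = L[i := True, j := False]"

lemma ht_swp:
  assumes "i < j" "j < length L" "L ! i" "\<not> L ! j"
  shows "ht (swp L i j) k = ht L k - (if i < k \<and> k \<le> j then 1 else 0)"
proof -
  have 1: "ht (L[i := False]) k' = ht L k' - (if i < k' then 1 else 0)" for k'
    using ht_upd[of i L False k'] assms by simp
  have 2: "ht (L[i := False, j := True]) k = ht (L[i := False]) k + (if j < k then 1 else 0)"
    using ht_upd[of j "L[i := False]" True k] assms by simp
  have 3: "i < k \<Longrightarrow> 1 \<le> ht L k" using ht_pos[of i k L] assms by simp
  show ?thesis unfolding swp_def 2 1 using assms 3 by auto
qed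

lemma ht_rse:
  assumes "i < j" "j < length L" "\<not> L ! i" "L ! j"
  shows "ht (rse L i j) k = ht L k + (if i < k \<and> k \<le> j then 1 else 0)"
proof -
  have 1: "ht (L[i := True]) k' = ht L k' + (if i < k' then 1 else 0)" for k'
    using ht_upd[of i L True k'] assms by simp
  have 2: "ht (L[i := True, j := False]) k = ht (L[i := True]) k - (if j < k then 1 else 0)"
    using ht_upd[of j "L[i := True]" False k] assms by simp
  have 3: "j < k \<Longrightarrow> 1 \<le> ht L k" using ht_pos[of j k L] assms by simp
  show ?thesis unfolding rse_def 2 1 using assms 3 by auto
qed

lemma length_swp[simp]: "length (swp L i j) = length L" by (simp add: swp_def)
lemma length_rse[simp]: "length (rse L i j) = length L" by (simp add: rse_def)

lemma Nset_swp:
  assumes "i < j" "j < length L" "L ! i" "\<not> L ! j"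
  shows "Nset (swp L i j) = Nset L - {Suc i} \<union> {Suc j}"
  using assms unfolding Nset_def swp_def by (auto simp: nth_list_update)

lemma Nset_rse:
  assumes "i < j" "j < length L" "\<not> L ! i" "L ! j"
  shows "Nset (rse L i j) = Nset L - {Suc j} \<union> {Suc i}"
  using assms unfolding Nset_def rse_def by (auto simp: nth_list_update)

lemma region_swp:
  assumes L: "L \<in> region_paths m r P Q" and P: "lpath m r P"
    and ij: "i < j" "j < length L" "L ! i" "\<not> L ! j"
  shows "swp L i j \<in> region_paths m r P Q \<longleftrightarrow> (\<forall>k. i < k \<and> k \<le> j \<longrightarrow> k \<notin> isect P L)"
proof -
  have len: "length L = m + r" "length P = m + r" using L P by (auto simp: region_paths_def lpath_def)
  have hs: "ht (swp L i j) k = ht L k - (if i < k \<and> k \<le> j then 1 else 0)" for k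
    using ht_swp[OF ij] .
  have PL: "k \<le> m + r \<Longrightarrow> ht P k \<le> ht L k" for k
    using L len by (auto simp: region_paths_def never_above_def)
  have LQ: "k \<le> m + r \<Longrightarrow> ht L k \<le> ht Q k" for k
    using L len by (auto simp: region_paths_def never_above_def)
  have "ht (swp L i j) (m+r) = ht L (m+r)" using hs[of "m+r"] ij len by simp
  then have lp: "lpath m r (swp L i j)"
    using L len by (simp add: region_paths_def lpath_def)
  have na2: "never_above (swp L i j) Q"
    unfolding never_above_def
  proof (intro allI impI)
    fix k assume "k \<le> length (swp L i j)"
    then have "ht L k \<le> ht Q k" using LQ len by simp
    then show "ht (swp L i j) k \<le> ht Q k" using hs[of k] by linarith
  qed
  show ?thesis
  proof
    assume "swp L i j \<in> region_paths m r P Q"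
    then have "k \<le> m + r \<Longrightarrow> ht P k \<le> ht (swp L i j) k" for k
      using len by (auto simp: region_paths_def never_above_def)
    then have sw: "k \<le> m + r \<Longrightarrow> ht P k \<le> ht (swp L i j) k" for k .
    show "\<forall>k. i < k \<and> k \<le> j \<longrightarrow> k \<notin> isect P L"
    proof (intro allI impI)
      fix k assume k: "i < k \<and> k \<le> j"
      then have km: "k \<le> m + r" using ij len by simp
      have "1 \<le> ht L k" using ht_pos[of i k L] ij k by simp
      then have "ht (swp L i j) k < ht L k" using hs[of k] k by simp
      then show "k \<notin> isect P L" using sw[OF km] by (auto simp: isect_def)
    qed
  next
    assume H: "\<forall>k. i < k \<and> k \<le> j \<longrightarrow> k \<notin> isect P L"
    have "k \<le> m + r \<Longrightarrow> ht P k \<le> ht (swp L i j) k" for k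
    proof -
      assume k: "k \<le> m + r"
      show ?thesis
      proof (cases "i < k \<and> k \<le> j")
        case True
        then have "ht P k \<noteq> ht L k" using H k len by (auto simp: isect_def)
        then show ?thesis using PL[OF k] hs[of k] True by simp
      next
        case False
        then have "(if i < k \<and> k \<le> j then 1 else 0) = (0::nat)" by (rule if_not_P)
        then have "ht (swp L i j) k = ht L k" using hs[of k] by simp
        then show ?thesis using PL[OF k] by simp
      qed
    qed
    then show "swp L i j \<in> region_paths m r P Q"
      using lp na2 len by (auto simp: region_paths_def never_above_def)
  qed
qed

definition ec :: "bool list \<Rightarrow> nat \<Rightarrow> nat" where "ec X k = k - ht X k"

lemma ec_Suc: "ec X (Suc k) = ec X k + (if k < length X \<and> X ! k then 0 else 1)"
  unfolding ec_def using ht_Suc[of X k] ht_le[of X k] by auto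

lemma ec_mono: "k \<le> k' \<Longrightarrow> ec X k \<le> ec X k'"
  by (induction k' rule: dec_induct) (auto simp: ec_Suc)

locale blkctx =
  fixes m r :: nat and P L :: "bool list"
  assumes P: "lpath m r P" and L: "lpath m r L" and PL: "never_above P L"
begin

abbreviation "n \<equiv> m + r"
abbreviation "I \<equiv> isect P L"
abbreviation "L' \<equiv> Lprime P L"

definition aa :: "nat \<Rightarrow> nat \<Rightarrow> nat" where
  "aa k1 k2 = (k2 - k1) - (ht L k2 - ht L k1)"

definition blk :: "nat \<Rightarrow> nat \<Rightarrow> bool" where
  "blk k1 k2 \<longleftrightarrow> k1 \<in> I \<and> k2 \<in> I \<and> k1 < k2 \<and> (\<forall>k. k1 < k \<and> k < k2 \<longrightarrow> k \<notin> I)"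

lemma lenL: "length L = n" using L by (simp add: lpath_def)
lemma lenP: "length P = n" using P by (simp add: lpath_def)

lemma I_sub: "I \<subseteq> {..n}" using lenL by (auto simp: isect_def)
lemma finI: "finite I" using I_sub finite_subset by blast
lemma I0: "0 \<in> I" using lenL by (simp add: isect_def)
lemma In: "n \<in> I" using lenL P L by (simp add: isect_def lpath_def)
lemma PLk: "k \<le> n \<Longrightarrow> ht P k \<le> ht L k" using PL lenP by (simp add: never_above_def)

lemma lenL'[simp]: "length L' = n" by (simp add: Lprime_def lenL)

lemma blk_exists:
  assumes t: "t < n"
  obtains k1 k2 where "blk k1 k2" "k1 \<le> t" "t < k2"
proof -
  let ?A = "{k \<in> I. k \<le> t}" and ?B = "{k \<in> I. t < k}"
  have fA: "finite ?A" "?A \<noteq> {}" using finI I0 by auto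
  have fB: "finite ?B" "?B \<noteq> {}" using finI In t by auto
  define k1 where "k1 = Max ?A"
  define k2 where "k2 = Min ?B"
  have k1: "k1 \<in> ?A" unfolding k1_def using fA Max_in by blast
  have k2: "k2 \<in> ?B" unfolding k2_def using fB Min_in by blast
  have "blk k1 k2" unfolding blk_def
  proof (intro conjI allI impI)
    show "k1 \<in> I" "k2 \<in> I" "k1 < k2" using k1 k2 by auto
    fix k assume k: "k1 < k \<and> k < k2"
    show "k \<notin> I"
    proof
      assume kI: "k \<in> I"
      show False
      proof (cases "k \<le> t")
        case True then have "k \<le> k1" unfolding k1_def using fA kI by auto
        then show False using k by simp
      next
        case False then have "k2 \<le> k" unfolding k2_def using fB kI by auto
        then show False using k by simp
      qed
    qed
  qed
  then show ?thesis using that k1 k2 by auto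
qed

lemma blk_Max:
  assumes "blk k1 k2" "k1 \<le> t" "t < k2"
  shows "Max {k \<in> I. k \<le> t} = k1"
proof (rule Max_eqI)
  show "finite {k \<in> I. k \<le> t}" using finI by auto
  show "k1 \<in> {k \<in> I. k \<le> t}" using assms by (auto simp: blk_def)
  fix y assume "y \<in> {k \<in> I. k \<le> t}"
  then have y: "y \<in> I" "y \<le> t" by auto
  show "y \<le> k1"
  proof (rule ccontr)
    assume "\<not> y \<le> k1"
    then have "k1 < y \<and> y < k2" using y assms(3) by simp
    then show False using assms(1) y by (auto simp: blk_def)
  qed
qed

lemma blk_Min:
  assumes "blk k1 k2" "k1 \<le> t" "t < k2"
  shows "Min {k \<in> I. t < k} = k2"
proof (rule Min_eqI)
  show "finite {k \<in> I. t < k}" using finI by auto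
  show "k2 \<in> {k \<in> I. t < k}" using assms by (auto simp: blk_def)
  fix y assume "y \<in> {k \<in> I. t < k}"
  then have y: "y \<in> I" "t < y" by auto
  show "k2 \<le> y"
  proof (rule ccontr)
    assume "\<not> k2 \<le> y"
    then have "k1 < y \<and> y < k2" using y assms(2) by simp
    then show False using assms(1) y by (auto simp: blk_def)
  qed
qed

lemma Lp_nth:
  assumes "blk k1 k2" "k1 \<le> t" "t < k2"
  shows "L' ! t = (aa k1 k2 \<le> t - k1)"
proof -
  have "t < n" using assms I_sub unfolding blk_def by auto
  then show ?thesis
    unfolding Lprime_def using blk_Max[OF assms] blk_Min[OF assms] lenL
    by (simp add: aa_def Let_def)
qed

lemma blk_arith:
  assumes "blk k1 k2"
  shows "ht L k1 \<le> ht L k2" "ht L k2 - ht L k1 \<le> k2 - k1" "ht L k1 \<le> k1" "ht L k2 \<le> k2"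
  using assms ht_mono[of k1 k2 L] ht_diff_le[of k1 k2 L] ht_le unfolding blk_def by auto

lemma Lp_ht:
  "t \<le> n \<Longrightarrow> blk k1 k2 \<Longrightarrow> k1 \<le> t \<Longrightarrow> t \<le> k2 \<Longrightarrow> ht L' t = ht L k1 + (t - k1 - aa k1 k2)"
proof (induction t arbitrary: k1 k2)
  case 0
  then show ?case by simp
next
  case (Suc t)
  show ?case
  proof (cases "k1 = Suc t")
    case True
    then have tI: "Suc t \<in> I" using Suc.prems by (simp add: blk_def)
    obtain k1' k2' where b: "blk k1' k2'" "k1' \<le> t" "t < k2'" using blk_exists[of t] Suc.prems by auto
    have "k2' = Suc t"
    proof (rule ccontr)
      assume "k2' \<noteq> Suc t"
      then have "k1' < Suc t \<and> Suc t < k2'" using b by simp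
      then show False using b(1) tI by (auto simp: blk_def)
    qed
    have IH: "ht L' t = ht L k1' + (t - k1' - aa k1' k2')" using Suc.IH[OF _ b(1) b(2)] b Suc.prems by simp
    have nth: "L' ! t = (aa k1' k2' \<le> t - k1')" using Lp_nth[OF b] .
    have "ht L' (Suc t) = ht L' t + (if L' ! t then 1 else 0)" using ht_Suc[of L' t] Suc.prems by simp
    also have "\<dots> = ht L k2'"
      using IH nth blk_arith[OF b(1)] \<open>k2' = Suc t\<close> b(2) unfolding aa_def by auto
    finally show ?thesis using True \<open>k2' = Suc t\<close> by simp
  next
    case False
    then have b: "k1 \<le> t" "t < k2" using Suc.prems by auto
    have IH: "ht L' t = ht L k1 + (t - k1 - aa k1 k2)" using Suc.IH[OF _ Suc.prems(2) b(1)] b Suc.prems by simp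
    have nth: "L' ! t = (aa k1 k2 \<le> t - k1)" using Lp_nth[OF Suc.prems(2) b] .
    have "ht L' (Suc t) = ht L' t + (if L' ! t then 1 else 0)" using ht_Suc[of L' t] Suc.prems by simp
    then show ?thesis using IH nth b by auto
  qed
qed

lemma Lp_E:
  assumes b: "blk k1 k2" "k1 \<le> t" "t < k2" and nE: "\<not> L' ! t"
  shows "ht L' t = ht L k1" "ec L' t = ec L k1 + (t - k1)" "t - k1 < aa k1 k2"
proof -
  have t: "t \<le> n" using b I_sub unfolding blk_def by auto
  show 3: "t - k1 < aa k1 k2" using Lp_nth[OF b] nE by simp
  show 1: "ht L' t = ht L k1" using Lp_ht[OF t b(1) b(2)] b 3 by simp
  show "ec L' t = ec L k1 + (t - k1)" using 1 blk_arith[OF b(1)] b unfolding ec_def by simp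
qed

lemma ec_k2: "blk k1 k2 \<Longrightarrow> ec L k2 = ec L k1 + aa k1 k2"
  using blk_arith[of k1 k2] unfolding ec_def aa_def blk_def by auto

lemma ec_strict: "j < j2 \<Longrightarrow> j < length X \<Longrightarrow> \<not> X ! j \<Longrightarrow> ec X j < ec X j2"
  using ec_Suc[of X j] ec_mono[of "Suc j" j2 X] by simp

lemma ht_strict: "i < i2 \<Longrightarrow> i < length X \<Longrightarrow> X ! i \<Longrightarrow> ht X i < ht X i2"
  using ht_Suc[of X i] ht_mono[of "Suc i" i2 X] by simp

definition prs :: "(nat \<times> nat) set" where
  "prs = {(i, j). i < j \<and> j < n \<and> L ! i \<and> \<not> L ! j \<and> (\<forall>k. i < k \<and> k \<le> j \<longrightarrow> k \<notin> I)}"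

definition fb :: "nat \<times> nat \<Rightarrow> nat \<times> nat" where
  "fb p = (ec L (snd p), ht L (fst p))"

lemma boxes_iff: "(x, y) \<in> boxes_below X \<longleftrightarrow> (\<exists>k < length X. \<not> X ! k \<and> ec X k = x \<and> y < ht X k)"
  by (auto simp: boxes_below_def ec_def)

lemma fb_inj: "inj_on fb prs"
proof (rule inj_onI)
  fix p q assume p: "p \<in> prs" and q: "q \<in> prs" and e: "fb p = fb q"
  obtain i j where pij: "p = (i, j)" by (cases p)
  obtain i2 j2 where qij: "q = (i2, j2)" by (cases q)
  have h: "i < j" "j < n" "L ! i" "\<not> L ! j" "i2 < j2" "j2 < n" "L ! i2" "\<not> L ! j2"
    using p q pij qij by (auto simp: prs_def)
  have e1: "ec L j = ec L j2" and e2: "ht L i = ht L i2" using e pij qij by (auto simp: fb_def)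
  have "j = j2"
  proof (rule ccontr)
    assume "j \<noteq> j2"
    then consider "j < j2" | "j2 < j" by linarith
    then show False using ec_strict[of j j2 L] ec_strict[of j2 j L] h e1 lenL by cases auto
  qed
  moreover have "i = i2"
  proof (rule ccontr)
    assume "i \<noteq> i2"
    then consider "i < i2" | "i2 < i" by linarith
    then show False using ht_strict[of i i2 L] ht_strict[of i2 i L] h e2 lenL by cases auto
  qed
  ultimately show "p = q" using pij qij by simp
qed

lemma fb_sub: "fb ` prs \<subseteq> boxes_below L - boxes_below L'"
proof
  fix z assume "z \<in> fb ` prs"
  then obtain i j where ij: "(i, j) \<in> prs" "z = (ec L j, ht L i)" by (auto simp: fb_def)
  have h: "i < j" "j < n" "L ! i" "\<not> L ! j" "\<forall>k. i < k \<and> k \<le> j \<longrightarrow> k \<notin> I"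
    using ij by (auto simp: prs_def)
  have hij: "ht L i < ht L j" using ht_strict[of i j L] h lenL by simp
  have inL: "z \<in> boxes_below L" using ij(2) h hij lenL boxes_iff by auto
  obtain k1 k2 where b: "blk k1 k2" "k1 \<le> j" "j < k2" using blk_exists h(2) by blast
  have k1i: "k1 \<le> i"
  proof (rule ccontr)
    assume "\<not> k1 \<le> i"
    then show False using h(5) b unfolding blk_def by auto
  qed
  have ecj: "ec L k1 \<le> ec L j" "ec L j < ec L k2"
    using ec_mono[of k1 j L] b ec_strict[of j k2 L] h lenL by auto
  have "z \<notin> boxes_below L'"
  proof
    assume "z \<in> boxes_below L'"
    then obtain k' where k': "k' < n" "\<not> L' ! k'" "ec L' k' = ec L j" "ht L i < ht L' k'"
      using ij(2) boxes_iff by auto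
    obtain k1' k2' where b': "blk k1' k2'" "k1' \<le> k'" "k' < k2'" using blk_exists k'(1) by blast
    note E = Lp_E[OF b' k'(2)]
    have ec': "ec L k1' \<le> ec L' k'" "ec L' k' < ec L k2'" using E ec_k2[OF b'(1)] by auto
    have "k1 = k1'"
    proof (rule ccontr)
      assume "k1 \<noteq> k1'"
      then consider "k1 < k1'" | "k1' < k1" by linarith
      then show False
      proof cases
        case 1
        have "k2 \<le> k1'"
        proof (rule ccontr)
          assume "\<not> k2 \<le> k1'"
          then show False using 1 b b' unfolding blk_def by auto
        qed
        then have "ec L k2 \<le> ec L k1'" by (rule ec_mono)
        then show False using ecj ec' k'(3) by linarith
      next
        case 2
        have "k2' \<le> k1"
        proof (rule ccontr)
          assume "\<not> k2' \<le> k1"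
          then show False using 2 b b' unfolding blk_def by auto
        qed
        then have "ec L k2' \<le> ec L k1" by (rule ec_mono)
        then show False using ecj ec' k'(3) by linarith
      qed
    qed
    then have "ht L' k' \<le> ht L i" using E(1) ht_mono[OF k1i] by simp
    then show False using k'(4) by simp
  qed
  then show "z \<in> boxes_below L - boxes_below L'" using inL by simp
qed

lemma fb_sup: "boxes_below L - boxes_below L' \<subseteq> fb ` prs"
proof
  fix z assume z: "z \<in> boxes_below L - boxes_below L'"
  obtain x y where zxy: "z = (x, y)" by (cases z)
  obtain j where j: "j < n" "\<not> L ! j" "ec L j = x" "y < ht L j"
    using z zxy boxes_iff lenL by auto
  obtain k1 k2 where b: "blk k1 k2" "k1 \<le> j" "j < k2" using blk_exists j(1) by blast
  have ecj: "ec L k1 \<le> ec L j" "ec L j < ec L k2"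
    using ec_mono[of k1 j L] b ec_strict[of j k2 L] j lenL by auto
  define k' where "k' = k1 + (x - ec L k1)"
  have ka: "k' - k1 < aa k1 k2" using ecj ec_k2[OF b(1)] j(3) unfolding k'_def by simp
  have "aa k1 k2 \<le> k2 - k1" unfolding aa_def by simp
  then have kk: "k1 \<le> k'" "k' < k2" using ka unfolding k'_def by auto
  have k'n: "k' < n" using kk b(1) I_sub unfolding blk_def by auto
  have nE: "\<not> L' ! k'" using Lp_nth[OF b(1) kk] ka by simp
  note E = Lp_E[OF b(1) kk nE]
  have "ec L' k' = x" using E(2) ecj j(3) unfolding k'_def by simp
  then have "\<not> y < ht L k1" using z zxy boxes_iff[of x y L'] k'n nE E(1) by auto
  then have yk: "ht L k1 \<le> y" by simp
  have k1j: "k1 < j" using yk j(4) b(2) by (cases "k1 = j") auto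
  define S where "S = {i. i < j \<and> ht L i \<le> y}"
  have finS: "finite S" unfolding S_def by auto
  have k1S: "k1 \<in> S" using k1j yk unfolding S_def by simp
  define i where "i = Max S"
  have iS: "i \<in> S" unfolding i_def using finS k1S Max_in by blast
  have k1i: "k1 \<le> i" unfolding i_def using finS k1S by simp
  have ij: "i < j" "ht L i \<le> y" using iS unfolding S_def by auto
  have hs: "y < ht L (Suc i)"
  proof (cases "Suc i = j")
    case True then show ?thesis using j(4) by simp
  next
    case False
    then have "Suc i < j" using ij by simp
    moreover have "Suc i \<notin> S" unfolding i_def using finS by (metis Max_ge Suc_n_not_le_n i_def)
    ultimately show ?thesis unfolding S_def by auto
  qed
  have il: "i < length L" using ij j(1) lenL by simp
  have Li: "L ! i" and hi: "ht L i = y"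
    using ht_Suc[of L i] hs ij il by (auto split: if_splits)
  have noI: "\<forall>k. i < k \<and> k \<le> j \<longrightarrow> k \<notin> I"
  proof (intro allI impI)
    fix k assume k: "i < k \<and> k \<le> j"
    then have "k1 < k \<and> k < k2" using k1i b by simp
    then show "k \<notin> I" using b(1) unfolding blk_def by auto
  qed
  have "(i, j) \<in> prs" using ij j Li noI unfolding prs_def by simp
  moreover have "fb (i, j) = z" using zxy j(3) hi by (simp add: fb_def)
  ultimately show "z \<in> fb ` prs" by (metis image_eqI)
qed

lemma card_prs: "card prs = area L' L"
proof -
  have "fb ` prs = boxes_below L - boxes_below L'" using fb_sub fb_sup by blast
  then have "card (boxes_below L - boxes_below L') = card prs" using card_image[OF fb_inj] by simp
  then show ?thesis by (simp add: area_def)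
qed

end

definition binary :: "real^'n \<Rightarrow> bool" where "binary v \<longleftrightarrow> (\<forall>k. v$k = 0 \<or> v$k = 1)"

lemma bin_aff2:
  fixes u v w :: "real^'n"
  assumes "binary u" "binary v" "binary w" "v \<noteq> w" "u \<in> affine hull {v, w}"
  shows "u = v \<or> u = w"
proof -
  obtain s t where st: "s + t = 1" "u = s *\<^sub>R v + t *\<^sub>R w"
    using assms(5) unfolding affine_hull_2 by blast
  obtain k where k: "v$k \<noteq> w$k" using assms(4) by (auto simp: vec_eq_iff)
  have uk: "u$k = s * v$k + t * w$k" using st by simp
  have "t = 0 \<or> t = 1"
  proof -
    have b: "u$k = 0 \<or> u$k = 1" "v$k = 0 \<or> v$k = 1" "w$k = 0 \<or> w$k = 1"
      using assms(1,2,3) unfolding binary_def by auto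
    then consider "v$k = 0" "w$k = 1" | "v$k = 1" "w$k = 0" using k by auto
    then show ?thesis
    proof cases
      case 1 then have "u$k = t" using uk by simp
      then show ?thesis using b(1) by auto
    next
      case 2 then have "u$k = 1 - t" using uk st(1) by simp
      then show ?thesis using b(1) by auto
    qed
  qed
  then show ?thesis
  proof
    assume "t = 0" then have "s = 1" using st by simp
    then show ?thesis using st \<open>t = 0\<close> by simp
  next
    assume "t = 1" then have "s = 0" using st by simp
    then show ?thesis using st \<open>t = 1\<close> by simp
  qed
qed

lemma edge_seg:
  fixes V :: "(real^'n) set"
  assumes fin: "finite V" and bin: "\<forall>v\<in>V. binary v"
    and F: "F face_of convex hull V" and dF: "aff_dim F = 1"
  shows "\<exists>v w. v \<in> V \<and> w \<in> V \<and> v \<noteq> w \<and> F = closed_segment v w"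
proof -
  obtain S where S: "S \<subseteq> V" "F = convex hull S"
    using face_of_convex_hull_subset[OF finite_imp_compact[OF fin] F] by blast
  have "\<exists>v\<in>S. \<exists>w\<in>S. v \<noteq> w"
  proof (rule ccontr)
    assume "\<not> ?thesis"
    then have "S = {} \<or> (\<exists>v. S = {v})" by blast
    then show False
    proof
      assume "S = {}" then have "F = {}" using S(2) by simp
      then show False using dF by simp
    next
      assume "\<exists>v. S = {v}" then obtain v where "S = {v}" by blast
      then have "F = {v}" using S(2) by simp
      then show False using dF by simp
    qed
  qed
  then obtain v w where vw: "v \<in> S" "w \<in> S" "v \<noteq> w" by blast
  have sub: "v \<in> F" "w \<in> F" using vw S(2) by (simp_all add: hull_inc)
  have "affine hull {v, w} \<subseteq> affine hull F" by (rule hull_mono) (simp add: sub)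
  moreover have "aff_dim (affine hull {v, w}) = aff_dim (affine hull F)"
  proof -
    have "aff_dim (affine hull {v, w}) = 1" using vw(3) by (simp only: aff_dim_affine_hull aff_dim_2) simp
    moreover have "aff_dim (affine hull F) = 1" using dF by (simp only: aff_dim_affine_hull)
    ultimately show ?thesis by simp
  qed
  moreover have "affine hull {v, w} \<noteq> {}" by simp
  ultimately have eq: "affine hull {v, w} = affine hull F"
    using affine_dim_equal[of "affine hull {v,w}" "affine hull F"] affine_affine_hull by blast
  have "S \<subseteq> {v, w}"
  proof
    fix u assume u: "u \<in> S"
    then have "u \<in> F" using S(2) by (simp add: hull_inc)
    then have "u \<in> affine hull F" by (simp add: hull_inc)
    then have uh: "u \<in> affine hull {v, w}" using eq by simp
    have "binary u" "binary v" "binary w" using S(1) bin u vw by auto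
    then have "u = v \<or> u = w" using bin_aff2[OF _ _ _ vw(3) uh] by blast
    then show "u \<in> {v, w}" by simp
  qed
  then have "S = {v, w}" using vw by auto
  then have "F = closed_segment v w" using S(2) by (simp add: segment_convex_hull)
  then show ?thesis using vw S(1) by blast
qed

lemma seg_aff_dim:
  fixes v w :: "real^'n"
  shows "v \<noteq> w \<Longrightarrow> aff_dim (closed_segment v w) = 1"
  by (simp add: segment_convex_hull aff_dim_convex_hull)

lemma seg_face:
  fixes V :: "(real^'n) set"
  assumes fin: "finite V" and vw: "v \<in> V" "w \<in> V"
    and le: "\<forall>x\<in>V. c \<bullet> x \<le> M" and eqv: "\<forall>x\<in>V. c \<bullet> x = M \<longleftrightarrow> x = v \<or> x = w"
  shows "closed_segment v w face_of convex hull V"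
proof -
  have "convex hull V \<subseteq> {x. c \<bullet> x \<le> M}"
    using le by (intro hull_minimal) (auto simp: convex_halfspace_le)
  then have T: "(convex hull V \<inter> {x. c \<bullet> x = M}) face_of convex hull V"
    by (intro face_of_Int_supporting_hyperplane_le) auto
  obtain S where S: "S \<subseteq> V" "convex hull V \<inter> {x. c \<bullet> x = M} = convex hull S"
    using face_of_convex_hull_subset[OF finite_imp_compact[OF fin] T] by blast
  have SS: "S \<subseteq> convex hull V \<inter> {x. c \<bullet> x = M}" unfolding S(2) by (rule hull_subset)
  have "S \<subseteq> {v, w}"
  proof
    fix x assume "x \<in> S"
    then have "x \<in> V" "c \<bullet> x = M" using S(1) SS by auto
    then show "x \<in> {v, w}" using eqv by simp
  qed
  then have 1: "convex hull V \<inter> {x. c \<bullet> x = M} \<subseteq> convex hull {v, w}"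
    unfolding S(2) by (rule hull_mono)
  have "v \<in> convex hull V" "w \<in> convex hull V" using vw by (simp_all add: hull_inc)
  moreover have "c \<bullet> v = M" "c \<bullet> w = M" using vw eqv by auto
  ultimately have "{v, w} \<subseteq> convex hull V \<inter> {x. c \<bullet> x = M}" by simp
  then have 2: "convex hull {v, w} \<subseteq> convex hull V \<inter> {x. c \<bullet> x = M}"
    using face_of_imp_convex[OF T] by (intro hull_minimal)
  have "convex hull V \<inter> {x. c \<bullet> x = M} = closed_segment v w"
    using 1 2 segment_convex_hull by auto
  then show ?thesis using T by simp
qed

lemma exch_contra:
  fixes V :: "(real^'n) set"
  assumes F: "closed_segment v w face_of convex hull V"
    and V: "v \<in> V" "w \<in> V" "v' \<in> V" "w' \<in> V" and bin: "\<forall>x\<in>V. binary x"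
    and vw: "v \<noteq> w" and sum: "v + w = v' + w'" and v': "v' \<noteq> v" "v' \<noteq> w"
  shows False
proof -
  have mid: "midpoint v w = midpoint v' w'" using sum by (simp add: midpoint_def)
  have mF: "midpoint v w \<in> closed_segment v w" by simp
  have "v' \<in> closed_segment v w"
  proof (cases "v' = w'")
    case True
    then show ?thesis using mid mF by simp
  next
    case False
    then have "midpoint v w \<in> open_segment v' w'" using mid by simp
    moreover have "v' \<in> convex hull V" "w' \<in> convex hull V" using V by (simp_all add: hull_inc)
    ultimately show ?thesis using F mF unfolding face_of_def by blast
  qed
  moreover have "closed_segment v w \<subseteq> affine hull {v, w}"
    unfolding segment_convex_hull by (rule convex_hull_subset_affine_hull)
  ultimately have h: "v' \<in> affine hull {v, w}" by blast
  have "binary v'" "binary v" "binary w" using bin V by auto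
  then have "v' = v \<or> v' = w" using bin_aff2[OF _ _ _ vw h] by blast
  then show False using v' by simp
qed

definition dn :: "nat \<Rightarrow> nat \<Rightarrow> bool list \<Rightarrow> bool list \<Rightarrow> nat set \<Rightarrow> nat set set" where
  "dn m r P Q B = {B2 \<in> lpm_bases m r P Q. \<exists>x y. B - B2 = {x} \<and> B2 - B = {y} \<and> x < y}"

lemma region_len: "L \<in> region_paths m r P Q \<Longrightarrow> length L = m + r"
  by (simp add: region_paths_def lpath_def)

lemma card_dn:
  assumes P: "lpath m r P" and Lr: "L \<in> region_paths m r P Q"
  shows "card (dn m r P Q (Nset L)) = card (blkctx.prs m r P L)"
proof -
  interpret blkctx m r P L using P Lr by unfold_locales (auto simp: region_paths_def)
  let ?g = "\<lambda>(i, j). Nset L - {Suc i} \<union> {Suc j}"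
  have len: "length L = m + r" using Lr region_len by blast
  have inj: "inj_on ?g prs"
  proof (rule inj_onI)
    fix p q assume p: "p \<in> prs" and q: "q \<in> prs" and e: "?g p = ?g q"
    obtain i j where pij: "p = (i, j)" by (cases p)
    obtain i2 j2 where qij: "q = (i2, j2)" by (cases q)
    have h: "i < j" "j < m + r" "L ! i" "\<not> L ! j" "i2 < j2" "j2 < m + r" "L ! i2" "\<not> L ! j2"
      using p q pij qij by (auto simp: prs_def)
    have m: "Suc i \<in> Nset L" "Suc i2 \<in> Nset L" "Suc j \<notin> Nset L" "Suc j2 \<notin> Nset L"
      using h len by (auto simp: Nset_def)
    have e': "Nset L - {Suc i} \<union> {Suc j} = Nset L - {Suc i2} \<union> {Suc j2}" using e pij qij by simp
    have "Suc i \<notin> Nset L - {Suc i} \<union> {Suc j}" using h by simp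
    then have "i = i2" using e' m by auto
    moreover have "Suc j \<in> Nset L - {Suc i2} \<union> {Suc j2}" using e' by auto
    then have "j = j2" using m by auto
    ultimately show "p = q" using pij qij by simp
  qed
  have img: "?g ` prs = dn m r P Q (Nset L)"
  proof
    show "?g ` prs \<subseteq> dn m r P Q (Nset L)"
    proof
      fix z assume "z \<in> ?g ` prs"
      then obtain i j where ij: "(i, j) \<in> prs" "z = Nset L - {Suc i} \<union> {Suc j}" by auto
      have h: "i < j" "j < length L" "L ! i" "\<not> L ! j" "\<forall>k. i < k \<and> k \<le> j \<longrightarrow> k \<notin> I"
        using ij len by (auto simp: prs_def)
      have "swp L i j \<in> region_paths m r P Q" using region_swp[OF Lr P h(1-4)] h(5) by simp
      moreover have "z = Nset (swp L i j)" using Nset_swp[OF h(1-4)] ij(2) by simp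
      ultimately have "z \<in> Nset ` region_paths m r P Q" by (rule rev_image_eqI)
      then have zb: "z \<in> lpm_bases m r P Q" using bases_eq by simp
      have m: "Suc i \<in> Nset L" "Suc j \<notin> Nset L" using h by (auto simp: Nset_def)
      have "Nset L - z = {Suc i}" "z - Nset L = {Suc j}" using ij(2) m h(1) by auto
      then show "z \<in> dn m r P Q (Nset L)" using zb h(1) unfolding dn_def by auto
    qed
  next
    show "dn m r P Q (Nset L) \<subseteq> ?g ` prs"
    proof
      fix B2 assume "B2 \<in> dn m r P Q (Nset L)"
      then obtain x y where B2: "B2 \<in> lpm_bases m r P Q" "Nset L - B2 = {x}" "B2 - Nset L = {y}" "x < y"
        unfolding dn_def by blast
      have "x \<in> Nset L" using B2(2) by blast
      then obtain i where i: "x = Suc i" "i < length L" "L ! i" by (auto simp: Nset_def)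
      have yB: "y \<in> B2" "y \<notin> Nset L" using B2(3) by blast+
      have "B2 \<subseteq> {1..m+r}" using B2(1) by (simp add: lpm_bases_def)
      then have "1 \<le> y" "y \<le> m + r" using yB by auto
      define j where "j = y - 1"
      have j: "y = Suc j" "j < length L" using len \<open>1 \<le> y\<close> \<open>y \<le> m + r\<close> unfolding j_def by auto
      have Lj: "\<not> L ! j" using yB j by (auto simp: Nset_def)
      have ij: "i < j" using B2(4) i j by simp
      have B2eq: "B2 = Nset L - {Suc i} \<union> {Suc j}" using B2(2,3) i(1) j(1) by blast
      obtain L2 where L2: "L2 \<in> region_paths m r P Q" "B2 = Nset L2" using B2(1) bases_eq by blast
      have "Nset (swp L i j) = B2" using Nset_swp[OF ij j(2) i(3) Lj] B2eq by simp
      then have "swp L i j = L2" using L2 region_len[OF L2(1)] len by (intro Nset_inj) auto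
      then have "\<forall>k. i < k \<and> k \<le> j \<longrightarrow> k \<notin> I" using region_swp[OF Lr P ij j(2) i(3) Lj] L2(1) by simp
      then have "(i, j) \<in> prs" using ij j len i Lj unfolding prs_def by simp
      moreover have "B2 = ?g (i, j)" using B2eq by simp
      ultimately show "B2 \<in> ?g ` prs" by (rule rev_image_eqI)
    qed
  qed
  show ?thesis using card_image[OF inj] img by simp
qed

lemma region_facts:
  assumes "L \<in> region_paths m r P Q" "lpath m r P"
  shows "length L = m + r" "ht L (m + r) = r" "\<And>k. k \<le> m + r \<Longrightarrow> ht P k \<le> ht L k"
    "\<And>k. k \<le> m + r \<Longrightarrow> ht L k \<le> ht Q k"
  using assms by (auto simp: region_paths_def lpath_def never_above_def)

lemma exch_path:
  assumes U1: "U1 \<in> region_paths m r P Q" and U2: "U2 \<in> region_paths m r P Q"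
    and P: "lpath m r P"
    and k0: "k0 \<le> m + r" "ht U2 k0 < ht U1 k0"
  shows "\<exists>a c. a < c \<and> c < m + r \<and> U1 ! a \<and> \<not> U2 ! a \<and> \<not> U1 ! c \<and> U2 ! c \<and>
           swp U1 a c \<in> region_paths m r P Q \<and> rse U2 a c \<in> region_paths m r P Q"
proof -
  note F1 = region_facts[OF U1 P] and F2 = region_facts[OF U2 P]
  have k0p: "0 < k0" using k0 by (cases k0) auto
  have k0n: "k0 < m + r" using k0 F1(2) F2(2) by (cases "k0 = m + r") auto
  define SA where "SA = {k. k < k0 \<and> ht U1 k \<le> ht U2 k}"
  define SC where "SC = {k. k0 < k \<and> k \<le> m + r \<and> ht U1 k \<le> ht U2 k}"
  have fSA: "finite SA" "0 \<in> SA" using k0p unfolding SA_def by auto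
  have fSC: "finite SC" "m + r \<in> SC" using k0n F1(2) F2(2) unfolding SC_def by auto
  define a where "a = Max SA"
  define c' where "c' = Min SC"
  have aS: "a \<in> SA" unfolding a_def using fSA Max_in by blast
  have cS: "c' \<in> SC" unfolding c'_def using fSC Min_in by blast
  have ha: "a < k0" "ht U1 a \<le> ht U2 a" using aS unfolding SA_def by auto
  have hc: "k0 < c'" "c' \<le> m + r" "ht U1 c' \<le> ht U2 c'" using cS unfolding SC_def by auto
  have pos: "ht U2 k < ht U1 k" if k: "a < k" "k < c'" for k
  proof -
    consider "k < k0" | "k = k0" | "k0 < k" by linarith
    then show ?thesis
    proof cases
      case 1
      have "k \<notin> SA" using k(1) fSA unfolding a_def using Max_ge not_le by blast
      then show ?thesis using 1 unfolding SA_def by auto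
    next
      case 2 then show ?thesis using k0 by simp
    next
      case 3
      have "k \<notin> SC" using k(2) fSC unfolding c'_def using Min_le not_le by blast
      then show ?thesis using 3 k hc unfolding SC_def by auto
    qed
  qed
  define c where "c = c' - 1"
  have cc: "c' = Suc c" "a < c" "c < m + r" using hc ha unfolding c_def by auto
  have an: "a < m + r" using cc by simp
  have pa: "ht U2 (Suc a) < ht U1 (Suc a)" using pos[of "Suc a"] ha hc by simp
  have "U1 ! a \<and> \<not> U2 ! a"
    using pa ha(2) ht_Suc[of U1 a] ht_Suc[of U2 a] an F1(1) F2(1) by (auto split: if_splits)
  then have A: "U1 ! a" "\<not> U2 ! a" by auto
  have pc: "ht U2 c < ht U1 c" using pos[of c] cc by simp
  have "\<not> U1 ! c \<and> U2 ! c"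
    using pc hc(3) cc(1) ht_Suc[of U1 c] ht_Suc[of U2 c] cc(3) F1(1) F2(1) by (auto split: if_splits)
  then have C: "\<not> U1 ! c" "U2 ! c" by auto
  have l1: "c < length U1" "c < length U2" using cc F1(1) F2(1) by auto
  have sw: "swp U1 a c \<in> region_paths m r P Q"
  proof -
    have "\<forall>k. a < k \<and> k \<le> c \<longrightarrow> k \<notin> isect P U1"
    proof (intro allI impI)
      fix k assume k: "a < k \<and> k \<le> c"
      then have "ht U2 k < ht U1 k" using pos cc by simp
      moreover have "ht P k \<le> ht U2 k" using F2(3) k cc by simp
      ultimately show "k \<notin> isect P U1" by (auto simp: isect_def)
    qed
    then show ?thesis using region_swp[OF U1 P cc(2) l1(1) A(1) C(1)] by simp
  qed
  have hr: "ht (rse U2 a c) k = ht U2 k + (if a < k \<and> k \<le> c then 1 else 0)" for k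
    using ht_rse[OF cc(2) l1(2) A(2) C(2)] .
  have rs: "rse U2 a c \<in> region_paths m r P Q"
    unfolding region_paths_def lpath_def never_above_def
  proof (intro CollectI conjI allI impI)
    show "length (rse U2 a c) = m + r" using F2 by simp
    show "ht (rse U2 a c) (m + r) = r" using hr[of "m+r"] F2(2) cc by simp
  next
    fix k assume "k \<le> length P"
    then have k: "k \<le> m + r" using P by (simp add: lpath_def)
    show "ht P k \<le> ht (rse U2 a c) k" using hr[of k] F2(3)[OF k] by simp
  next
    fix k assume "k \<le> length (rse U2 a c)"
    then have k: "k \<le> m + r" using F2 by simp
    show "ht (rse U2 a c) k \<le> ht Q k"
    proof (cases "a < k \<and> k \<le> c")
      case True
      then have "ht U2 k < ht U1 k" using pos cc by simp
      then show ?thesis using hr[of k] True F1(4)[OF k] by simp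
    next
      case False
      then have "(if a < k \<and> k \<le> c then 1 else 0) = (0::nat)" by (rule if_not_P)
      then show ?thesis using hr[of k] F2(4)[OF k] by simp
    qed
  qed
  show ?thesis using cc A C sw rs by blast
qed

definition same2 :: "nat set \<Rightarrow> nat set \<Rightarrow> nat set \<Rightarrow> nat set \<Rightarrow> bool" where
  "same2 A B C D \<longleftrightarrow> (\<forall>b. (b \<in> A \<and> b \<in> B \<longleftrightarrow> b \<in> C \<and> b \<in> D) \<and> (b \<in> A \<or> b \<in> B \<longleftrightarrow> b \<in> C \<or> b \<in> D))"

lemma exch_core:
  assumes P: "lpath m r P" and U1: "U1 \<in> region_paths m r P Q" and U2: "U2 \<in> region_paths m r P Q"
    and k: "k \<le> m + r" "ht U2 k < ht U1 k" and c2: "2 \<le> card (Nset U1 - Nset U2)"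
  shows "\<exists>B1' B2'. B1' \<in> lpm_bases m r P Q \<and> B2' \<in> lpm_bases m r P Q \<and>
           same2 B1' B2' (Nset U1) (Nset U2) \<and> B1' \<noteq> Nset U1 \<and> B1' \<noteq> Nset U2"
proof -
  obtain a c where ac: "a < c" "c < m + r" "U1 ! a" "\<not> U2 ! a" "\<not> U1 ! c" "U2 ! c"
    "swp U1 a c \<in> region_paths m r P Q" "rse U2 a c \<in> region_paths m r P Q"
    using exch_path[OF U1 U2 P k] by blast
  have len: "length U1 = m + r" "length U2 = m + r" using U1 U2 region_len by blast+
  have e1: "Nset (swp U1 a c) = Nset U1 - {Suc a} \<union> {Suc c}"
    using Nset_swp[of a c U1] ac len by simp
  have e2: "Nset (rse U2 a c) = Nset U2 - {Suc c} \<union> {Suc a}"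
    using Nset_rse[of a c U2] ac len by simp
  have mem: "Suc a \<in> Nset U1" "Suc a \<notin> Nset U2" "Suc c \<notin> Nset U1" "Suc c \<in> Nset U2"
    using ac len by (auto simp: Nset_def)
  have b1: "Nset (swp U1 a c) \<in> lpm_bases m r P Q" using ac(7) bases_eq by blast
  have b2: "Nset (rse U2 a c) \<in> lpm_bases m r P Q" using ac(8) bases_eq by blast
  have s2: "same2 (Nset (swp U1 a c)) (Nset (rse U2 a c)) (Nset U1) (Nset U2)"
    unfolding same2_def e1 e2 using mem ac(1) by auto
  have n1: "Nset (swp U1 a c) \<noteq> Nset U1" unfolding e1 using ac(1) mem by auto
  have n2: "Nset (swp U1 a c) \<noteq> Nset U2"
  proof
    assume eq: "Nset (swp U1 a c) = Nset U2"
    have "Nset U1 - Nset U2 \<subseteq> {Suc a}"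
    proof
      fix x assume x: "x \<in> Nset U1 - Nset U2"
      show "x \<in> {Suc a}"
      proof (rule ccontr)
        assume "x \<notin> {Suc a}"
        then have "x \<in> Nset (swp U1 a c)" unfolding e1 using x by auto
        then show False using eq x by simp
      qed
    qed
    then have "card (Nset U1 - Nset U2) \<le> 1" by (metis card.empty card.insert card_mono empty_iff finite.intros(1) finite_insert le_zero_eq subset_singletonD order_refl One_nat_def)
    then show False using c2 by simp
  qed
  show ?thesis using b1 b2 s2 n1 n2 by blast
qed

lemma exch_set:
  assumes P: "lpath m r P" and B1: "B1 \<in> lpm_bases m r P Q" and B2: "B2 \<in> lpm_bases m r P Q"
    and c2: "2 \<le> card (B1 - B2)"
  shows "\<exists>B1' B2'. B1' \<in> lpm_bases m r P Q \<and> B2' \<in> lpm_bases m r P Q \<and>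
           same2 B1' B2' B1 B2 \<and> B1' \<noteq> B1 \<and> B1' \<noteq> B2"
proof -
  obtain U1 where U1: "U1 \<in> region_paths m r P Q" "B1 = Nset U1" using B1 bases_eq by blast
  obtain U2 where U2: "U2 \<in> region_paths m r P Q" "B2 = Nset U2" using B2 bases_eq by blast
  have len: "length U1 = m + r" "length U2 = m + r" using U1 U2 region_len by blast+
  have "U1 \<noteq> U2" using c2 U1 U2 by auto
  then have "\<not> (\<forall>k \<le> length U1. ht U1 k = ht U2 k)" using eq_by_ht len by metis
  then obtain k where k: "k \<le> m + r" "ht U1 k \<noteq> ht U2 k" using len by auto
  have cB: "card B1 = r" "card B2 = r" using B1 B2 by (auto simp: lpm_bases_def)
  have fin: "finite B1" "finite B2" using U1 U2 by simp_all
  have "card (B1 - B2) = card B1 - card (B1 \<inter> B2)" using fin by (simp add: card_Diff_subset_Int)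
  moreover have "card (B2 - B1) = card B2 - card (B1 \<inter> B2)" using fin
    by (simp add: card_Diff_subset_Int Int_commute)
  ultimately have cc: "card (B2 - B1) = card (B1 - B2)" using cB by simp
  show ?thesis
  proof (cases "ht U2 k < ht U1 k")
    case True
    then show ?thesis using exch_core[OF P U1(1) U2(1) k(1) True] c2 U1 U2 by simp
  next
    case False
    then have "ht U1 k < ht U2 k" using k by simp
    then obtain B1' B2' where X: "B1' \<in> lpm_bases m r P Q" "B2' \<in> lpm_bases m r P Q"
      "same2 B1' B2' B2 B1" "B1' \<noteq> B2" "B1' \<noteq> B1"
      using exch_core[OF P U2(1) U1(1) k(1)] c2 cc U1 U2 by auto
    have "same2 B1' B2' B1 B2" using X(3) unfolding same2_def by blast
    then show ?thesis using X by blast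
  qed
qed

definition vc :: "(nat \<Rightarrow> 'n::finite) \<Rightarrow> nat set \<Rightarrow> real^'n" where
  "vc idx B = (\<chi> j. if j \<in> idx ` B then 1 else 0)"

lemma vc_comp:
  assumes bij: "bij_betw idx {1..N} (UNIV :: 'n::finite set)" and B: "B \<subseteq> {1..N}" and b: "b \<in> {1..N}"
  shows "(vc idx B) $ (idx b) = (if b \<in> B then 1 else 0)"
proof -
  have "inj_on idx {1..N}" using bij by (simp add: bij_betw_def)
  then have "idx b \<in> idx ` B \<longleftrightarrow> b \<in> B" using B b by (auto dest: inj_onD)
  then show ?thesis by (simp add: vc_def)
qed

lemma vc_surj:
  assumes bij: "bij_betw idx {1..N} (UNIV :: 'n::finite set)"
  obtains b where "b \<in> {1..N}" "j = idx b"
  using bij unfolding bij_betw_def by (metis UNIV_I imageE)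

lemma vc_inj:
  assumes bij: "bij_betw idx {1..N} (UNIV :: 'n::finite set)" and "A \<subseteq> {1..N}" "B \<subseteq> {1..N}"
    and e: "vc idx A = vc idx B"
  shows "A = B"
proof -
  have "b \<in> A \<longleftrightarrow> b \<in> B" if b: "b \<in> {1..N}" for b
    using vc_comp[OF bij assms(2) b] vc_comp[OF bij assms(3) b] e by (auto split: if_splits)
  then show ?thesis using assms(2,3) by blast
qed

lemma vc_binary: "binary (vc idx B)"
  by (simp add: binary_def vc_def)

lemma vc_sum:
  assumes bij: "bij_betw idx {1..N} (UNIV :: 'n::finite set)"
    and sub: "A \<subseteq> {1..N}" "B \<subseteq> {1..N}" "C \<subseteq> {1..N}" "D \<subseteq> {1..N}"
    and s: "same2 A B C D"
  shows "vc idx A + vc idx B = vc idx C + vc idx D"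
  unfolding vec_eq_iff
proof
  fix j :: 'n
  obtain b where b: "b \<in> {1..N}" "j = idx b" using vc_surj[OF bij] by blast
  show "(vc idx A + vc idx B) $ j = (vc idx C + vc idx D) $ j"
    using vc_comp[OF bij sub(1) b(1)] vc_comp[OF bij sub(2) b(1)] vc_comp[OF bij sub(3) b(1)]
      vc_comp[OF bij sub(4) b(1)] s b(2) unfolding same2_def by (auto split: if_splits)
qed

lemma vc_inner:
  assumes bij: "bij_betw idx {1..N} (UNIV :: 'n::finite set)" and sub: "A \<subseteq> {1..N}" "B \<subseteq> {1..N}"
  shows "vc idx A \<bullet> vc idx B = real (card (A \<inter> B))"
proof -
  have "vc idx A \<bullet> vc idx B = (\<Sum>j\<in>UNIV. (vc idx A)$j * (vc idx B)$j)"
    by (simp add: inner_vec_def)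
  also have "\<dots> = (\<Sum>b\<in>{1..N}. (vc idx A)$(idx b) * (vc idx B)$(idx b))"
    using sum.reindex_bij_betw[OF bij, of "\<lambda>j. (vc idx A)$j * (vc idx B)$j"] by simp
  also have "\<dots> = (\<Sum>b\<in>{1..N}. if b \<in> A \<inter> B then 1 else 0)"
    by (rule sum.cong) (auto simp: vc_comp[OF bij sub(1)] vc_comp[OF bij sub(2)])
  also have "\<dots> = real (card ({1..N} \<inter> (A \<inter> B)))"
    using sum.inter_restrict[of "{1..N}" "\<lambda>_. (1::real)" "A \<inter> B"] by simp
  also have "{1..N} \<inter> (A \<inter> B) = A \<inter> B" using sub by auto
  finally show ?thesis .
qed

lemma key_count:
  assumes fin: "finite B" "finite S" and cB: "card B = card S + 1"
    and xy: "x \<notin> S" "y \<notin> S" "x \<noteq> y"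
  shows "card ((S \<union> {x, y}) \<inter> B) + card (S \<inter> B) \<le> 2 * card S + 1"
    "card ((S \<union> {x, y}) \<inter> B) + card (S \<inter> B) = 2 * card S + 1 \<longleftrightarrow> B = insert x S \<or> B = insert y S"
proof -
  have c1: "card ((S \<union> {x, y}) \<inter> B) \<le> card B" using fin by (intro card_mono) auto
  have c2: "card (S \<inter> B) \<le> card S" using fin by (intro card_mono) auto
  show "card ((S \<union> {x, y}) \<inter> B) + card (S \<inter> B) \<le> 2 * card S + 1" using c1 c2 cB by simp
  show "card ((S \<union> {x, y}) \<inter> B) + card (S \<inter> B) = 2 * card S + 1 \<longleftrightarrow> B = insert x S \<or> B = insert y S"
  proof
    assume eq: "card ((S \<union> {x, y}) \<inter> B) + card (S \<inter> B) = 2 * card S + 1"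
    then have e1: "card ((S \<union> {x, y}) \<inter> B) = card B" and e2: "card (S \<inter> B) = card S"
      using c1 c2 cB by linarith+
    have "(S \<union> {x, y}) \<inter> B = B" using card_subset_eq[OF fin(1) _ e1] by auto
    then have BU: "B \<subseteq> S \<union> {x, y}" by blast
    have "S \<inter> B = S" using card_subset_eq[OF fin(2) _ e2] by auto
    then have SB: "S \<subseteq> B" by blast
    have notboth: "\<not> (x \<in> B \<and> y \<in> B)"
    proof
      assume "x \<in> B \<and> y \<in> B"
      then have "insert x (insert y S) \<subseteq> B" using SB by auto
      then have "card (insert x (insert y S)) \<le> card B" using fin by (intro card_mono) auto
      then show False using cB xy fin by simp
    qed
    have noneither: "x \<in> B \<or> y \<in> B"
    proof (rule ccontr)
      assume "\<not> (x \<in> B \<or> y \<in> B)"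
      then have "B \<subseteq> S" using BU by auto
      then have "card B \<le> card S" using fin by (intro card_mono) auto
      then show False using cB by simp
    qed
    show "B = insert x S \<or> B = insert y S" using notboth noneither BU SB by auto
  next
    assume "B = insert x S \<or> B = insert y S"
    then show "card ((S \<union> {x, y}) \<inter> B) + card (S \<inter> B) = 2 * card S + 1"
    proof
      assume B: "B = insert x S"
      have "(S \<union> {x, y}) \<inter> B = B" "S \<inter> B = S" using B by auto
      then show ?thesis using cB by simp
    next
      assume B: "B = insert y S"
      have "(S \<union> {x, y}) \<inter> B = B" "S \<inter> B = S" using B by auto
      then show ?thesis using cB by simp
    qed
  qed
qed

lemma bases_facts:
  assumes "B \<in> lpm_bases m r P Q"
  shows "B \<subseteq> {1..m+r}" "card B = r" "finite B"
  using assms by (auto simp: lpm_bases_def intro: finite_subset)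

lemma finite_bases: "finite (lpm_bases m r P Q)"
  using finite_region bases_eq by simp

lemma swap_face:
  assumes bij: "bij_betw idx {1..m+r} (UNIV :: 'n::finite set)"
    and B1: "B1 \<in> lpm_bases m r P Q" and B2: "B2 \<in> lpm_bases m r P Q"
    and d: "B1 - B2 = {x}" "B2 - B1 = {y}"
  shows "closed_segment (vc idx B1) (vc idx B2) face_of convex hull (vc idx ` lpm_bases m r P Q)"
proof -
  define S where "S = B1 \<inter> B2"
  define U where "U = S \<union> {x, y}"
  have xy: "x \<notin> S" "y \<notin> S" "x \<noteq> y" using d unfolding S_def by auto
  have B1e: "B1 = insert x S" and B2e: "B2 = insert y S" using d unfolding S_def by auto
  note F1 = bases_facts[OF B1] and F2 = bases_facts[OF B2]
  have finS: "finite S" using F1 unfolding S_def by simp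
  have cS: "card S + 1 = r" using F1(2) B1e xy finS by simp
  have Usub: "U \<subseteq> {1..m+r}" "S \<subseteq> {1..m+r}" using F1 F2 B1e B2e unfolding U_def by auto
  define c where "c = vc idx U + vc idx S"
  define M where "M = real (2 * card S + 1)"
  have cval: "c \<bullet> vc idx B = real (card (U \<inter> B) + card (S \<inter> B))" if "B \<in> lpm_bases m r P Q" for B
    using vc_inner[OF bij Usub(1) bases_facts(1)[OF that]] vc_inner[OF bij Usub(2) bases_facts(1)[OF that]]
    unfolding c_def by (simp add: inner_add_left)
  show ?thesis
  proof (rule seg_face)
    show "finite (vc idx ` lpm_bases m r P Q)" using finite_bases by simp
    show "vc idx B1 \<in> vc idx ` lpm_bases m r P Q" "vc idx B2 \<in> vc idx ` lpm_bases m r P Q" using B1 B2 by auto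
    show "\<forall>z\<in>vc idx ` lpm_bases m r P Q. c \<bullet> z \<le> M"
    proof
      fix z assume "z \<in> vc idx ` lpm_bases m r P Q"
      then obtain B where B: "B \<in> lpm_bases m r P Q" "z = vc idx B" by blast
      note FB = bases_facts[OF B(1)]
      have "card (U \<inter> B) + card (S \<inter> B) \<le> 2 * card S + 1"
        using key_count(1)[OF FB(3) finS _ xy] FB(2) cS unfolding U_def by simp
      then show "c \<bullet> z \<le> M" using cval[OF B(1)] B(2) unfolding M_def by simp
    qed
    show "\<forall>z\<in>vc idx ` lpm_bases m r P Q. c \<bullet> z = M \<longleftrightarrow> z = vc idx B1 \<or> z = vc idx B2"
    proof
      fix z assume "z \<in> vc idx ` lpm_bases m r P Q"
      then obtain B where B: "B \<in> lpm_bases m r P Q" "z = vc idx B" by blast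
      note FB = bases_facts[OF B(1)]
      have "c \<bullet> z = M \<longleftrightarrow> card (U \<inter> B) + card (S \<inter> B) = 2 * card S + 1"
        using cval[OF B(1)] B(2) unfolding M_def by (simp only: of_nat_eq_iff)
      also have "\<dots> \<longleftrightarrow> B = B1 \<or> B = B2"
        using key_count(2)[OF FB(3) finS _ xy] FB(2) cS B1e B2e unfolding U_def by simp
      also have "\<dots> \<longleftrightarrow> z = vc idx B1 \<or> z = vc idx B2"
        using vc_inj[OF bij FB(1) F1(1)] vc_inj[OF bij FB(1) F2(1)] B(2) by auto
      finally show "c \<bullet> z = M \<longleftrightarrow> z = vc idx B1 \<or> z = vc idx B2" .
    qed
  qed
qed

lemma card_diff_pos:
  assumes "finite B1" "finite B2" "card B1 = card B2" "B1 \<noteq> B2"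
  shows "1 \<le> card (B1 - B2)"
proof (rule ccontr)
  assume "\<not> 1 \<le> card (B1 - B2)"
  then have "card (B1 - B2) = 0" by simp
  then have "B1 \<subseteq> B2" using assms(1) by auto
  then have "B1 = B2" using card_subset_eq assms by blast
  then show False using assms(4) by simp
qed

theorem corollary5p9:
  fixes m r :: nat and P Q :: "bool list" and idx :: "nat \<Rightarrow> 'n::finite"
  assumes "lpath m r P" and "lpath m r Q"
    and "never_above P Q"
    and "connected_region m r P Q"
    and "bij_betw idx {1..m+r} (UNIV :: 'n set)"
  shows "card (edges (lpm_polytope idx m r P Q))
           = (\<Sum>L \<in> region_paths m r P Q. area (Lprime P L) L)"
proof -
  note P = assms(1) and bij = assms(5)
  let ?bs = "lpm_bases m r P Q"
  let ?V = "vc idx ` ?bs"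
  have vcf: "vc idx = (\<lambda>B. (\<chi> j. if j \<in> idx ` B then 1 else 0))" by (rule ext) (simp add: vc_def)
  have poly: "lpm_polytope idx m r P Q = convex hull ?V" unfolding lpm_polytope_def vcf ..
  define OP where "OP = Sigma ?bs (dn m r P Q)"
  define gE where "gE = (\<lambda>(B1, B2). closed_segment (vc idx B1) (vc idx B2))"
  have OPm: "(B1, B2) \<in> OP \<longleftrightarrow> B1 \<in> ?bs \<and> B2 \<in> ?bs \<and> (\<exists>x y. B1 - B2 = {x} \<and> B2 - B1 = {y} \<and> x < y)"
    for B1 B2 unfolding OP_def dn_def by auto
  have finV: "finite ?V" using finite_bases by simp
  have binV: "\<forall>v\<in>?V. binary v" using vc_binary by blast
  have inj: "inj_on gE OP"
  proof (rule inj_onI)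
    fix p q assume p: "p \<in> OP" and q: "q \<in> OP" and e: "gE p = gE q"
    obtain B1 B2 where pB: "p = (B1, B2)" by (cases p)
    obtain C1 C2 where qC: "q = (C1, C2)" by (cases q)
    have pB': "(B1, B2) \<in> OP" using p pB by simp
    have qC': "(C1, C2) \<in> OP" using q qC by simp
    have hp: "B1 \<in> ?bs" "B2 \<in> ?bs" "\<exists>x y. B1 - B2 = {x} \<and> B2 - B1 = {y} \<and> x < y"
      using pB' unfolding OPm by blast+
    have hq: "C1 \<in> ?bs" "C2 \<in> ?bs" "\<exists>x y. C1 - C2 = {x} \<and> C2 - C1 = {y} \<and> x < y"
      using qC' unfolding OPm by blast+
    obtain x y where xy: "B1 - B2 = {x}" "B2 - B1 = {y}" "x < y" using hp(3) by blast
    obtain x' y' where xy': "C1 - C2 = {x'}" "C2 - C1 = {y'}" "x' < y'" using hq(3) by blast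
    have "{vc idx B1, vc idx B2} = {vc idx C1, vc idx C2}" using e pB qC unfolding gE_def by simp
    then have dd: "(vc idx B1 = vc idx C1 \<and> vc idx B2 = vc idx C2) \<or> (vc idx B1 = vc idx C2 \<and> vc idx B2 = vc idx C1)"
      by (simp only: doubleton_eq_iff)
    have sub: "B1 \<subseteq> {1..m+r}" "B2 \<subseteq> {1..m+r}" "C1 \<subseteq> {1..m+r}" "C2 \<subseteq> {1..m+r}"
      using bases_facts(1)[OF hp(1)] bases_facts(1)[OF hp(2)] bases_facts(1)[OF hq(1)] bases_facts(1)[OF hq(2)] by simp_all
    from dd show "p = q"
    proof
      assume "vc idx B1 = vc idx C1 \<and> vc idx B2 = vc idx C2"
      then have "B1 = C1" "B2 = C2" using vc_inj[OF bij sub(1) sub(3)] vc_inj[OF bij sub(2) sub(4)] by auto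
      then show ?thesis using pB qC by simp
    next
      assume "vc idx B1 = vc idx C2 \<and> vc idx B2 = vc idx C1"
      then have e1: "B1 = C2" "B2 = C1" using vc_inj[OF bij sub(1) sub(4)] vc_inj[OF bij sub(2) sub(3)] by auto
      have "{x'} = {y}" using xy(2) xy'(1) e1 by simp
      moreover have "{y'} = {x}" using xy(1) xy'(2) e1 by simp
      ultimately have "x' = y" "y' = x" by auto
      then show ?thesis using xy(3) xy'(3) by simp
    qed
  qed
  have img: "gE ` OP = edges (convex hull ?V)"
  proof
    show "gE ` OP \<subseteq> edges (convex hull ?V)"
    proof
      fix F assume "F \<in> gE ` OP"
      then obtain B1 B2 where B: "(B1, B2) \<in> OP" "F = closed_segment (vc idx B1) (vc idx B2)"
        unfolding gE_def by auto
      have hp: "B1 \<in> ?bs" "B2 \<in> ?bs" "\<exists>x y. B1 - B2 = {x} \<and> B2 - B1 = {y} \<and> x < y"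
        using B(1) unfolding OPm by blast+
      obtain x y where xy: "B1 - B2 = {x}" "B2 - B1 = {y}" "x < y" using hp(3) by blast
      have "B1 \<noteq> B2" using xy by auto
      then have "vc idx B1 \<noteq> vc idx B2" using vc_inj[OF bij bases_facts(1)[OF hp(1)] bases_facts(1)[OF hp(2)]] by blast
      then have "aff_dim F = 1" using B(2) seg_aff_dim by simp
      moreover have "F face_of convex hull ?V" using swap_face[OF bij hp(1) hp(2) xy(1) xy(2)] B(2) by simp
      ultimately show "F \<in> edges (convex hull ?V)" by (simp add: edges_def)
    qed
  next
    show "edges (convex hull ?V) \<subseteq> gE ` OP"
    proof
      fix F assume "F \<in> edges (convex hull ?V)"
      then have F: "F face_of convex hull ?V" "aff_dim F = 1" by (auto simp: edges_def)
      obtain v w where vw: "v \<in> ?V" "w \<in> ?V" "v \<noteq> w" "F = closed_segment v w"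
        using edge_seg[OF finV binV F] by blast
      obtain B1 where B1: "B1 \<in> ?bs" "v = vc idx B1" using vw by blast
      obtain B2 where B2: "B2 \<in> ?bs" "w = vc idx B2" using vw by blast
      note F1 = bases_facts[OF B1(1)] and F2 = bases_facts[OF B2(1)]
      have ne: "B1 \<noteq> B2" using vw B1 B2 by auto
      have cc: "card B1 = card B2" using F1(2) F2(2) by simp
      have c1: "1 \<le> card (B1 - B2)" using card_diff_pos[OF F1(3) F2(3) cc ne] .
      have "\<not> 2 \<le> card (B1 - B2)"
      proof
        assume "2 \<le> card (B1 - B2)"
        then obtain B1' B2' where X: "B1' \<in> ?bs" "B2' \<in> ?bs" "same2 B1' B2' B1 B2" "B1' \<noteq> B1" "B1' \<noteq> B2"
          using exch_set[OF P B1(1) B2(1)] by blast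
        have s2: "same2 B1 B2 B1' B2'" using X(3) unfolding same2_def by blast
        have sum: "v + w = vc idx B1' + vc idx B2'"
          using vc_sum[OF bij F1(1) F2(1) bases_facts(1)[OF X(1)] bases_facts(1)[OF X(2)]] s2 B1 B2
          by simp
        have "vc idx B1' \<noteq> v" "vc idx B1' \<noteq> w"
          using vc_inj[OF bij bases_facts(1)[OF X(1)] F1(1)] vc_inj[OF bij bases_facts(1)[OF X(1)] F2(1)]
            X(4,5) B1(2) B2(2) by blast+
        moreover have "vc idx B1' \<in> ?V" "vc idx B2' \<in> ?V" using X by blast+
        ultimately show False
          using exch_contra[of v w ?V "vc idx B1'" "vc idx B2'"] F(1) vw(1-4) binV sum by blast
      qed
      then have "card (B1 - B2) = 1" using c1 by simp
      then obtain x where x: "B1 - B2 = {x}" using card_1_singletonE by blast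
      have "card (B1 - B2) = card B1 - card (B1 \<inter> B2)" using F1(3) F2(3) by (simp add: card_Diff_subset_Int)
      moreover have "card (B2 - B1) = card B2 - card (B1 \<inter> B2)" using F1(3) F2(3)
        by (simp add: card_Diff_subset_Int Int_commute)
      ultimately have "card (B2 - B1) = 1" using F1(2) F2(2) \<open>card (B1 - B2) = 1\<close> by simp
      then obtain y where y: "B2 - B1 = {y}" using card_1_singletonE by blast
      have "x \<noteq> y" using x y by auto
      then consider "x < y" | "y < x" by linarith
      then show "F \<in> gE ` OP"
      proof cases
        case 1
        then have "(B1, B2) \<in> OP" unfolding OPm using B1(1) B2(1) x y by blast
        moreover have "F = gE (B1, B2)" using vw B1 B2 unfolding gE_def by simp
        ultimately show ?thesis by (rule rev_image_eqI)
      next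
        case 2
        then have "(B2, B1) \<in> OP" unfolding OPm using B1(1) B2(1) x y by blast
        moreover have "F = gE (B2, B1)" using vw B1 B2 unfolding gE_def by (simp add: closed_segment_commute)
        ultimately show ?thesis by (rule rev_image_eqI)
      qed
    qed
  qed
  have "card (edges (lpm_polytope idx m r P Q)) = card OP"
    using card_image[OF inj] img poly by simp
  also have "\<dots> = (\<Sum>B\<in>?bs. card (dn m r P Q B))"
    unfolding OP_def using finite_bases by (intro card_SigmaI) (auto simp: dn_def intro: finite_subset)
  also have "\<dots> = (\<Sum>L\<in>region_paths m r P Q. card (dn m r P Q (Nset L)))"
  proof -
    have "inj_on Nset (region_paths m r P Q)"
    proof (rule inj_onI)
      fix L1 L2 assume "L1 \<in> region_paths m r P Q" "L2 \<in> region_paths m r P Q" "Nset L1 = Nset L2"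
      then show "L1 = L2" using Nset_inj[of L1 L2] region_len[of L1] region_len[of L2] by simp
    qed
    then show ?thesis unfolding bases_eq by (simp add: sum.reindex)
  qed
  also have "\<dots> = (\<Sum>L\<in>region_paths m r P Q. area (Lprime P L) L)"
  proof (rule sum.cong)
    fix L assume Lr: "L \<in> region_paths m r P Q"
    interpret blkctx m r P L using P Lr by unfold_locales (auto simp: region_paths_def)
    show "card (dn m r P Q (Nset L)) = area (Lprime P L) L" using card_dn[OF P Lr] card_prs by simp
  qed simp
  finally show ?thesis .
qed

end
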